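(* For any continuous function $f:\mathrm{SO}(2)\to\mathbb{R}$, there exists a rotation $R\in\mathrm{SO}(2)$ such that the rotation of angle $f(R)$ differs from $R$ by a rotation of angle $\pi$, i.e. $\rho(f(R))R^{-1}=\rho(\pi)$.
   Context: For $\theta\in\mathbb{R}$, $\rho(\theta)=\begin{bmatrix}\cos\theta&-\sin\theta\\ \sin\theta&\cos\theta\end{bmatrix}\in\mathrm{SO}(2)$ denotes the rotation of angle $\theta$. *)

theory Defs
  imports "HOL-Analysis.Analysis"
begin

definition SO2 :: "(real^2^2) set" where
  "SO2 = {A. orthogonal_matrix A \<and> det A = 1}"

definition rho :: "real \<Rightarrow> real^2^2" where
  "rho \<theta> = vector [vector [cos \<theta>, - sin \<theta>], vector [sin \<theta>, cos \<theta>]]"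

end

theory Submission
  imports Defs
begin

lemma rho_nth:
  "rho t $ 1 $ 1 = cos t" "rho t $ 1 $ 2 = - sin t"
  "rho t $ 2 $ 1 = sin t" "rho t $ 2 $ 2 = cos t"
  by (simp_all add: rho_def)

lemma sum2: "(\<Sum>i\<in>(UNIV::2 set). g i) = g 1 + g 2"
  by (simp add: UNIV_2)

lemma rho_mult: "rho a ** rho b = rho (a + b)"
  by (simp add: vec_eq_iff forall_2 matrix_matrix_mult_def sum2 rho_nth cos_add sin_add)

lemma rho_0: "rho 0 = mat 1"
  by (simp add: vec_eq_iff forall_2 rho_nth mat_def)

lemma rho_SO2: "rho t \<in> SO2"
  unfolding SO2_def orthogonal_matrix_def
  by (simp add: vec_eq_iff forall_2 matrix_matrix_mult_def sum2 rho_nth transpose_def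
      mat_def det_2 power2_eq_square[symmetric])

lemma rho_inv: "matrix_inv (rho t) = rho (- t)"
proof -
  have e: "rho t ** rho (-t) = mat 1 \<and> rho (-t) ** rho t = mat 1"
    by (simp add: rho_mult rho_0)
  define B where "B = matrix_inv (rho t)"
  have "rho t ** B = mat 1 \<and> B ** rho t = mat 1"
    unfolding B_def matrix_inv_def by (rule someI, rule e)
  then have "B = B ** (rho t ** rho (-t))" using e by simp
  also have "\<dots> = rho (-t)"
    by (metis matrix_mul_assoc matrix_mul_lid \<open>rho t ** B = mat 1 \<and> B ** rho t = mat 1\<close>)
  finally show ?thesis unfolding B_def .
qed

lemma rho_cont: "continuous_on UNIV rho"
proof -
  define h where "h i j t = (if i = (1::2) then (if j = (1::2) then cos t else - sin t)
     else (if j = 1 then sin t else cos t))" for i j and t :: real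
  have "rho = (\<lambda>t. \<chi> i j. h i j t)"
    by (auto simp: vec_eq_iff forall_2 rho_nth h_def)
  moreover have "continuous_on UNIV (\<lambda>t. \<chi> i j. h i j t)"
    apply (intro continuous_on_vec_lambda)
    subgoal for i j
      unfolding h_def by (cases "i = 1"; cases "j = 1") (auto intro!: continuous_intros)
    done
  ultimately show ?thesis by (simp only:)
qed

lemma rho_period: "rho (pi + 2 * pi * real_of_int k) = rho pi"
proof -
  have "sin (pi + 2 * pi * real_of_int k) = sin pi \<and> cos (pi + 2 * pi * real_of_int k) = cos pi"
    using sin_cos_eq_iff by blast
  then have c: "cos (pi + 2 * pi * real_of_int k) = cos pi"
    and s: "sin (pi + 2 * pi * real_of_int k) = sin pi" by auto
  show ?thesis unfolding vec_eq_iff forall_2 rho_nth c s by simp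
qed

theorem theorem3:
  fixes f :: "real^2^2 \<Rightarrow> real"
  assumes "continuous_on SO2 f"
  shows "\<exists>R\<in>SO2. rho (f R) ** matrix_inv R = rho pi"
proof -
  define g where "g t = f (rho t) - t" for t
  have rs: "rho ` UNIV \<subseteq> SO2" using rho_SO2 by auto
  have gc: "continuous_on {0..2*pi} g"
    unfolding g_def
    by (intro continuous_intros continuous_on_compose2[OF assms continuous_on_subset[OF rho_cont]]) (use rs in auto)
  define k where "k = floor ((f (mat 1) - pi) / (2*pi))"
  define c where "c = pi + 2 * pi * real_of_int k"
  have k1: "real_of_int k \<le> (f (mat 1) - pi) / (2*pi)"
    and k2: "(f (mat 1) - pi) / (2*pi) < real_of_int k + 1"
    unfolding k_def by linarith+
  have c1: "c \<le> f (mat 1)" using k1 pi_gt_zero unfolding c_def by (simp add: field_simps)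
  have c2: "f (mat 1) - 2 * pi \<le> c" using k2 pi_gt_zero unfolding c_def by (simp add: field_simps)
  have g0: "g 0 = f (mat 1)" by (simp add: g_def rho_0)
  have r2: "rho (2*pi) = mat 1" by (simp add: vec_eq_iff forall_2 rho_nth mat_def)
  have g2: "g (2*pi) = f (mat 1) - 2*pi" by (simp add: g_def r2)
  obtain t where t: "t \<in> {0..2*pi}" "g t = c"
    using IVT2'[of g "2*pi" c 0] gc g0 g2 c1 c2 by auto
  show ?thesis
  proof (intro bexI[of _ "rho t"] rho_SO2)
    have "f (rho t) - t = c" using t g_def by simp
    then have "f (rho t) + - t = c" by simp
    then show "rho (f (rho t)) ** matrix_inv (rho t) = rho pi"
      by (simp add: rho_inv rho_mult c_def rho_period)
  qed
qed

end
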